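(* Let $L\in\mathcal{M}(\mathbb{R}^d)$ and $a\in\mathbb{R}_*^d$. Then $L\circ D_a=D_a\circ L$.
   Context: $\mathbb{R}_*=\mathbb{R}\setminus\{0\}$; $\sigma(a)=\prod_j a_j/|a_j|$ for $a\in\mathbb{R}_*^d$; $x/a$ is the coordinatewise quotient. $\mathcal{M}(\mathbb{R}^d)$ is the set of continuous linear operators $L$ on $\mathcal{D}'(\mathbb{R}^d)$ such that every monomial $x^\alpha$, $\alpha\in\mathbb{N}_0^d$, is an eigenvector of $L$. For $a\in\mathbb{R}_*^d$ the dilation operator $D_a$ on $\mathcal{D}'(\mathbb{R}^d)$ is $(D_aT)\varphi=T_x\Big(\frac{\sigma(a)}{a_1\cdots a_d}\varphi\big(\tfrac{x}{a}\big)\Big)$ for $\varphi\in\mathcal{D}(\mathbb{R}^d)$; one has $D_a\xi^\alpha=a^\alpha\xi^\alpha$. *)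

theory Defs
  imports "HOL-Analysis.Analysis"
begin

text \<open>Points of R^d are elements of real^'n, d = CARD('n). Distributions are complex-valued.\<close>

type_synonym 'n testfun = "real^'n \<Rightarrow> complex"
type_synonym 'n distr = "'n testfun \<Rightarrow> complex"

definition partial_deriv :: "'n::finite \<Rightarrow> 'n testfun \<Rightarrow> 'n testfun" where
  "partial_deriv i f = (\<lambda>x. frechet_derivative f (at x) (axis i 1))"

fun iter_partial :: "'n::finite list \<Rightarrow> 'n testfun \<Rightarrow> 'n testfun" where
  "iter_partial [] f = f"
| "iter_partial (i # is) f = partial_deriv i (iter_partial is f)"

definition smooth_fun :: "('n::finite) testfun \<Rightarrow> bool" where
  "smooth_fun f \<longleftrightarrow> (\<forall>is x. iter_partial is f differentiable (at x))"

definition test_fun :: "('n::finite) testfun \<Rightarrow> bool" where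
  "test_fun \<phi> \<longleftrightarrow> smooth_fun \<phi> \<and> bounded {x. \<phi> x \<noteq> 0}"

definition D_conv :: "(nat \<Rightarrow> ('n::finite) testfun) \<Rightarrow> 'n testfun \<Rightarrow> bool" where
  "D_conv \<phi>s \<phi> \<longleftrightarrow> (\<forall>k. test_fun (\<phi>s k)) \<and> test_fun \<phi> \<and>
     (\<exists>K. compact K \<and> (\<forall>k. {x. \<phi>s k x \<noteq> 0} \<subseteq> K)) \<and>
     (\<forall>is. uniform_limit UNIV (\<lambda>k. iter_partial is (\<phi>s k)) (iter_partial is \<phi>) sequentially)"

text \<open>Distributions: continuous linear functionals on D(R^d), extended by 0 off D(R^d).\<close>
definition distribution :: "('n::finite) distr \<Rightarrow> bool" where
  "distribution T \<longleftrightarrow>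
     (\<forall>\<phi>. \<not> test_fun \<phi> \<longrightarrow> T \<phi> = 0) \<and>
     (\<forall>\<phi> \<psi>. test_fun \<phi> \<longrightarrow> test_fun \<psi> \<longrightarrow> T (\<lambda>x. \<phi> x + \<psi> x) = T \<phi> + T \<psi>) \<and>
     (\<forall>\<phi> c. test_fun \<phi> \<longrightarrow> T (\<lambda>x. c * \<phi> x) = c * T \<phi>) \<and>
     (\<forall>\<phi>s \<phi>. D_conv \<phi>s \<phi> \<longrightarrow> (\<lambda>k. T (\<phi>s k)) \<longlonglongrightarrow> T \<phi>)"

definition distributions :: "('n::finite) distr set" where
  "distributions = {T. distribution T}"

text \<open>Weak-* topology on D'(R^d) (pointwise convergence).\<close>
definition distr_topology :: "('n::finite) distr topology" where
  "distr_topology = subtopology (product_topology (\<lambda>_. euclidean) UNIV) distributions"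

definition monomial_distr :: "('n::finite \<Rightarrow> nat) \<Rightarrow> 'n distr" where
  "monomial_distr \<alpha> = (\<lambda>\<phi>. if test_fun \<phi>
      then (LINT x|lborel. complex_of_real (\<Prod>i\<in>UNIV. (x$i) ^ \<alpha> i) * \<phi> x) else 0)"

definition cont_lin_op :: "(('n::finite) distr \<Rightarrow> 'n distr) \<Rightarrow> bool" where
  "cont_lin_op L \<longleftrightarrow> (\<forall>T\<in>distributions. L T \<in> distributions) \<and>
     (\<forall>T\<in>distributions. \<forall>S\<in>distributions. L (\<lambda>\<phi>. T \<phi> + S \<phi>) = (\<lambda>\<phi>. L T \<phi> + L S \<phi>)) \<and>
     (\<forall>T\<in>distributions. \<forall>c. L (\<lambda>\<phi>. c * T \<phi>) = (\<lambda>\<phi>. c * L T \<phi>)) \<and>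
     continuous_map distr_topology distr_topology L"

definition M_class :: "(('n::finite) distr \<Rightarrow> 'n distr) set" where
  "M_class = {L. cont_lin_op L \<and>
     (\<forall>\<alpha>. \<exists>c. L (monomial_distr \<alpha>) = (\<lambda>\<phi>. c * monomial_distr \<alpha> \<phi>))}"

definition sigma_sign :: "real^'n::finite \<Rightarrow> real" where
  "sigma_sign a = (\<Prod>i\<in>UNIV. a$i / \<bar>a$i\<bar>)"

definition dilation :: "real^'n::finite \<Rightarrow> 'n distr \<Rightarrow> 'n distr" where
  "dilation a T = (\<lambda>\<phi>. T (\<lambda>x. complex_of_real (sigma_sign a / (\<Prod>i\<in>UNIV. a$i))
                              * \<phi> (\<chi> i. x$i / a$i)))"

end

theory Submission
  imports Defs
begin


definition smap :: "real^'n::finite \<Rightarrow> real^'n \<Rightarrow> real^'n" where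
  "smap b x = (\<chi> i. x$i / b$i)"

lemma smap_linear: "linear (smap b)"
  by (auto intro!: linearI simp: smap_def vec_eq_iff add_divide_distrib)

lemma smap_bl: "bounded_linear (smap b)"
  using smap_linear linear_conv_bounded_linear by blast

lemma smap_axis: "smap b (axis i 1) = (1 / b$i) *\<^sub>R axis i 1"
  by (simp add: smap_def vec_eq_iff axis_def)

lemma smap_inv: "\<forall>i. b$i \<noteq> 0 \<Longrightarrow> smap (\<chi> i. 1 / b$i) (smap b x) = x"
  by (simp add: smap_def vec_eq_iff)

lemma fd_add:
  assumes "f differentiable (at x)" "g differentiable (at x)"
  shows "frechet_derivative (\<lambda>x. f x + g x) (at x) = (\<lambda>h. frechet_derivative f (at x) h + frechet_derivative g (at x) h)"
proof -
  have "((\<lambda>x. f x + g x) has_derivative (\<lambda>h. frechet_derivative f (at x) h + frechet_derivative g (at x) h)) (at x)"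
    using assms by (intro has_derivative_add) (auto simp: frechet_derivative_works)
  then show ?thesis by (rule frechet_derivative_at[symmetric])
qed

lemma fd_cmult:
  fixes f :: "real^'n::finite \<Rightarrow> complex"
  assumes "f differentiable (at x)"
  shows "frechet_derivative (\<lambda>x. c * f x) (at x) = (\<lambda>h. c * frechet_derivative f (at x) h)"
proof -
  have "((\<lambda>x. c * f x) has_derivative (\<lambda>h. c * frechet_derivative f (at x) h)) (at x)"
    using assms by (intro has_derivative_mult_right) (auto simp: frechet_derivative_works)
  then show ?thesis by (rule frechet_derivative_at[symmetric])
qed

lemma fd_const: "frechet_derivative (\<lambda>x. c) (at x) = (\<lambda>h. 0)"
  by (rule frechet_derivative_at[symmetric]) (rule has_derivative_const)

lemma hd_dil:
  fixes F :: "real^'n::finite \<Rightarrow> complex"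
  assumes "(F has_derivative F') (at (smap b x))"
  shows "((\<lambda>x. K * F (smap b x)) has_derivative (\<lambda>h. K * F' (smap b h))) (at x)"
proof -
  have "((F \<circ> smap b) has_derivative (F' \<circ> smap b)) (at x)"
    by (rule diff_chain_at[OF bounded_linear_imp_has_derivative[OF smap_bl] assms])
  then show ?thesis unfolding o_def by (rule has_derivative_mult_right)
qed

lemma diff_dil:
  fixes F :: "real^'n::finite \<Rightarrow> complex"
  assumes "F differentiable (at (smap b x))"
  shows "(\<lambda>x. K * F (smap b x)) differentiable (at x)"
  using hd_dil assms unfolding differentiable_def by blast

lemma partial_dil:
  fixes F :: "real^'n::finite \<Rightarrow> complex"
  assumes "\<And>y. F differentiable (at y)"
  shows "partial_deriv i (\<lambda>x. K * F (smap b x)) = (\<lambda>x. K * complex_of_real (1 / b$i) * partial_deriv i F (smap b x))"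
proof
  fix x
  have d: "(F has_derivative frechet_derivative F (at (smap b x))) (at (smap b x))"
    using assms frechet_derivative_works by blast
  have "frechet_derivative (\<lambda>x. K * F (smap b x)) (at x) = (\<lambda>h. K * frechet_derivative F (at (smap b x)) (smap b h))"
    by (rule frechet_derivative_at[symmetric]) (rule hd_dil[OF d])
  moreover have "linear (frechet_derivative F (at (smap b x)))"
    using d has_derivative_linear by blast
  then have "frechet_derivative F (at (smap b x)) (smap b (axis i 1)) = (1 / b$i) *\<^sub>R frechet_derivative F (at (smap b x)) (axis i 1)"
    by (simp add: smap_axis linear_scale)
  ultimately show "partial_deriv i (\<lambda>x. K * F (smap b x)) x = K * complex_of_real (1 / b$i) * partial_deriv i F (smap b x)"
    by (simp add: partial_deriv_def scaleR_conv_of_real)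
qed

definition kk :: "real^'n::finite \<Rightarrow> 'n list \<Rightarrow> complex" where
  "kk b is = prod_list (map (\<lambda>i. complex_of_real (1 / b$i)) is)"

lemma iter_dil:
  assumes "smooth_fun \<phi>"
  shows "iter_partial is (\<lambda>x. C * \<phi> (smap b x)) = (\<lambda>x. (C * kk b is) * iter_partial is \<phi> (smap b x))"
proof (induction "is" arbitrary: C)
  case Nil thus ?case by (simp add: kk_def)
next
  case (Cons i "is")
  have "iter_partial (i # is) (\<lambda>x. C * \<phi> (smap b x)) = partial_deriv i (\<lambda>x. (C * kk b is) * iter_partial is \<phi> (smap b x))"
    using Cons by simp
  also have "\<dots> = (\<lambda>x. (C * kk b is) * complex_of_real (1 / b$i) * partial_deriv i (iter_partial is \<phi>) (smap b x))"
    by (rule partial_dil) (use assms in \<open>auto simp: smooth_fun_def\<close>)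
  also have "\<dots> = (\<lambda>x. (C * kk b (i # is)) * iter_partial (i # is) \<phi> (smap b x))"
    by (simp add: kk_def mult_ac)
  finally show ?case .
qed

lemma iter_add:
  assumes "smooth_fun f" "smooth_fun g"
  shows "iter_partial is (\<lambda>x. f x + g x) = (\<lambda>x. iter_partial is f x + iter_partial is g x)"
proof (induction "is")
  case Nil thus ?case by simp
next
  case (Cons i "is")
  show ?case using Cons assms unfolding smooth_fun_def by (simp add: partial_deriv_def fd_add)
qed

lemma iter_cmult:
  assumes "smooth_fun f"
  shows "iter_partial is (\<lambda>x. c * f x) = (\<lambda>x. c * iter_partial is f x)"
proof (induction "is")
  case Nil thus ?case by simp
next
  case (Cons i "is")
  show ?case using Cons assms unfolding smooth_fun_def by (simp add: partial_deriv_def fd_cmult)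
qed

lemma iter_zero: "iter_partial is (\<lambda>x::real^'n::finite. 0::complex) = (\<lambda>x. 0)"
  by (induction "is") (simp_all add: partial_deriv_def fd_const)

lemma smooth_add: assumes "smooth_fun f" "smooth_fun g" shows "smooth_fun (\<lambda>x. f x + g x)"
  unfolding smooth_fun_def iter_add[OF assms]
  using assms unfolding smooth_fun_def by (auto intro: differentiable_add)

lemma smooth_cmult: "smooth_fun f \<Longrightarrow> smooth_fun (\<lambda>x. c * f x)"
  by (simp add: iter_cmult smooth_fun_def)

lemma smooth_dil: assumes "smooth_fun \<phi>" shows "smooth_fun (\<lambda>x. C * \<phi> (smap b x))"
  unfolding smooth_fun_def iter_dil[OF assms]
  using assms unfolding smooth_fun_def by (blast intro: diff_dil)

lemma test_zero: "test_fun (\<lambda>x. 0)"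
  by (simp add: test_fun_def smooth_fun_def iter_zero)

lemma test_add: "test_fun f \<Longrightarrow> test_fun g \<Longrightarrow> test_fun (\<lambda>x. f x + g x)"
  unfolding test_fun_def
  by (auto simp: smooth_add intro: bounded_subset[of "{x. f x \<noteq> 0} \<union> {x. g x \<noteq> 0}"])

lemma test_cmult: "test_fun f \<Longrightarrow> test_fun (\<lambda>x. c * f x)"
  unfolding test_fun_def
  by (auto simp: smooth_cmult intro: bounded_subset[of "{x. f x \<noteq> 0}"])

lemma test_dil:
  assumes "test_fun \<phi>" "\<forall>i. b$i \<noteq> 0"
  shows "test_fun (\<lambda>x. C * \<phi> (smap b x))"
proof -
  have "{x. C * \<phi> (smap b x) \<noteq> 0} \<subseteq> smap (\<chi> i. 1 / b$i) ` {y. \<phi> y \<noteq> 0}"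
    using smap_inv[OF assms(2)] by (auto intro!: image_eqI)
  moreover have "bounded (smap (\<chi> i. 1 / b$i) ` {y. \<phi> y \<noteq> 0})"
    using assms(1) unfolding test_fun_def by (intro bounded_linear_image smap_bl) auto
  ultimately have "bounded {x. C * \<phi> (smap b x) \<noteq> 0}" by (rule bounded_subset[rotated])
  then show ?thesis using assms smooth_dil unfolding test_fun_def by blast
qed

lemma test_cont: "test_fun f \<Longrightarrow> continuous_on UNIV f"
proof -
  assume "test_fun f"
  then have "\<And>x. f differentiable (at x)" unfolding test_fun_def smooth_fun_def
    by (metis iter_partial.simps(1))
  then show ?thesis by (intro continuous_at_imp_continuous_on) (auto intro: differentiable_imp_continuous_within)
qed



definition Ca :: "real^'n::finite \<Rightarrow> complex" where
  "Ca a = complex_of_real (sigma_sign a / (\<Prod>i\<in>UNIV. a$i))"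

lemma dil_eq: "dilation a T = (\<lambda>\<phi>. T (\<lambda>x. Ca a * \<phi> (smap a x)))"
  by (simp add: dilation_def smap_def Ca_def)

lemma Ca_nz: "\<forall>i. a$i \<noteq> 0 \<Longrightarrow> Ca a \<noteq> 0"
  by (simp add: Ca_def sigma_sign_def)

lemma smap_inv2: "\<forall>i. a$i \<noteq> 0 \<Longrightarrow> smap a (smap (\<chi> i. 1 / a$i) y) = y"
  by (simp add: smap_def vec_eq_iff)

lemma test_dil_iff:
  assumes a: "\<forall>i. a$i \<noteq> 0"
  shows "test_fun (\<lambda>x. Ca a * \<phi> (smap a x)) \<longleftrightarrow> test_fun \<phi>"
proof
  assume t: "test_fun (\<lambda>x. Ca a * \<phi> (smap a x))"
  have a': "\<forall>i. (\<chi> i. 1 / a$i) $ i \<noteq> 0" using a by simp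
  have "test_fun (\<lambda>y. (1 / Ca a) * ((\<lambda>x. Ca a * \<phi> (smap a x)) (smap (\<chi> i. 1 / a$i) y)))"
    by (rule test_dil[OF t a'])
  moreover have "(\<lambda>y. (1 / Ca a) * ((\<lambda>x. Ca a * \<phi> (smap a x)) (smap (\<chi> i. 1 / a$i) y))) = \<phi>"
    using smap_inv2[OF a] Ca_nz[OF a] by (simp add: fun_eq_iff)
  ultimately show "test_fun \<phi>" by simp
next
  assume "test_fun \<phi>" then show "test_fun (\<lambda>x. Ca a * \<phi> (smap a x))" using test_dil a by blast
qed

lemma ul_cmult_comp:
  fixes F :: "nat \<Rightarrow> 'a \<Rightarrow> complex"
  assumes "uniform_limit UNIV F G sequentially"
  shows "uniform_limit UNIV (\<lambda>k x. c * F k (h x)) (\<lambda>x. c * G (h x)) sequentially"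
  unfolding uniform_limit_iff
proof (intro allI impI)
  fix e :: real assume e: "e > 0"
  have pos: "norm c + 1 > 0" by (simp add: add_nonneg_pos)
  then have e': "e / (norm c + 1) > 0" using e by simp
  have "\<forall>\<^sub>F n in sequentially. \<forall>x\<in>UNIV. dist (F n x) (G x) < e / (norm c + 1)"
    using assms e' unfolding uniform_limit_iff by blast
  then show "\<forall>\<^sub>F n in sequentially. \<forall>x\<in>UNIV. dist (c * F n (h x)) (c * G (h x)) < e"
  proof (rule eventually_mono)
    fix n assume H: "\<forall>x\<in>UNIV. dist (F n x) (G x) < e / (norm c + 1)"
    show "\<forall>x\<in>UNIV. dist (c * F n (h x)) (c * G (h x)) < e"
    proof
      fix x
      have d: "dist (F n (h x)) (G (h x)) < e / (norm c + 1)" using H by blast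
      have "dist (c * F n (h x)) (c * G (h x)) = norm c * dist (F n (h x)) (G (h x))"
        by (simp add: dist_norm norm_mult[symmetric] right_diff_distrib)
      also have "\<dots> \<le> (norm c + 1) * dist (F n (h x)) (G (h x))"
        by (simp add: mult_right_mono)
      also have "\<dots> < (norm c + 1) * (e / (norm c + 1))"
        using d pos by (intro mult_strict_left_mono) auto
      also have "\<dots> = e" using pos by simp
      finally show "dist (c * F n (h x)) (c * G (h x)) < e" .
    qed
  qed
qed

lemma D_conv_dil:
  fixes a :: "real^'n::finite" and \<phi>s :: "nat \<Rightarrow> 'n testfun"
  assumes D: "D_conv \<phi>s \<phi>" and a: "\<forall>i. a$i \<noteq> 0"
  shows "D_conv (\<lambda>k x. C * \<phi>s k (smap a x)) (\<lambda>x. C * \<phi> (smap a x))"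
proof -
  from D have t: "\<And>k. test_fun (\<phi>s k)" "test_fun \<phi>" and
    ul: "\<And>is. uniform_limit UNIV (\<lambda>k. iter_partial is (\<phi>s k)) (iter_partial is \<phi>) sequentially"
    unfolding D_conv_def by auto
  from D obtain K where K: "compact K" "\<And>k. {x. \<phi>s k x \<noteq> 0} \<subseteq> K"
    unfolding D_conv_def by auto
  let ?K = "smap (\<chi> i. 1 / a$i) ` K"
  have cK: "compact ?K"
    by (rule compact_continuous_image[OF linear_continuous_on[OF smap_bl] K(1)])
  have sK: "{x. C * \<phi>s k (smap a x) \<noteq> 0} \<subseteq> ?K" for k
  proof
    fix x assume "x \<in> {x. C * \<phi>s k (smap a x) \<noteq> 0}"
    then have "smap a x \<in> K" using K(2)[of k] by auto
    then show "x \<in> ?K" using smap_inv[OF a, of x] by (metis image_eqI)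
  qed
  have sm: "\<And>k. smooth_fun (\<phi>s k)" "smooth_fun \<phi>" using t unfolding test_fun_def by auto
  have "uniform_limit UNIV (\<lambda>k. iter_partial is (\<lambda>x. C * \<phi>s k (smap a x))) (iter_partial is (\<lambda>x. C * \<phi> (smap a x))) sequentially" for "is"
    unfolding iter_dil[OF sm(1)] iter_dil[OF sm(2)]
    by (rule ul_cmult_comp[OF ul])
  then show ?thesis unfolding D_conv_def using t test_dil[OF _ a] cK sK by blast
qed

lemma distribution_dil:
  fixes a :: "real^'n::finite" and T :: "'n distr"
  assumes T: "distribution T" and a: "\<forall>i. a$i \<noteq> 0"
  shows "distribution (dilation a T)"
  unfolding distribution_def dil_eq
proof (intro conjI allI impI)
  fix \<phi> :: "'n testfun" assume "\<not> test_fun \<phi>"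
  then show "T (\<lambda>x. Ca a * \<phi> (smap a x)) = 0" using T test_dil_iff[OF a] unfolding distribution_def by blast
next
  fix \<phi> \<psi> :: "'n testfun" assume "test_fun \<phi>" "test_fun \<psi>"
  then have "test_fun (\<lambda>x. Ca a * \<phi> (smap a x))" "test_fun (\<lambda>x. Ca a * \<psi> (smap a x))"
    using test_dil_iff[OF a] by auto
  then have "T (\<lambda>x. Ca a * \<phi> (smap a x) + Ca a * \<psi> (smap a x)) = T (\<lambda>x. Ca a * \<phi> (smap a x)) + T (\<lambda>x. Ca a * \<psi> (smap a x))"
    using T unfolding distribution_def by blast
  then show "T (\<lambda>x. Ca a * (\<phi> (smap a x) + \<psi> (smap a x))) = T (\<lambda>x. Ca a * \<phi> (smap a x)) + T (\<lambda>x. Ca a * \<psi> (smap a x))"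
    by (simp add: distrib_left)
next
  fix \<phi> :: "'n testfun" and c assume "test_fun \<phi>"
  then have "test_fun (\<lambda>x. Ca a * \<phi> (smap a x))" using test_dil_iff[OF a] by auto
  then have "T (\<lambda>x. c * (Ca a * \<phi> (smap a x))) = c * T (\<lambda>x. Ca a * \<phi> (smap a x))"
    using T unfolding distribution_def by blast
  then show "T (\<lambda>x. Ca a * (c * \<phi> (smap a x))) = c * T (\<lambda>x. Ca a * \<phi> (smap a x))"
    by (simp add: mult.left_commute)
next
  fix \<phi>s :: "nat \<Rightarrow> 'n testfun" and \<phi> assume "D_conv \<phi>s \<phi>"
  then have "D_conv (\<lambda>k x. Ca a * \<phi>s k (smap a x)) (\<lambda>x. Ca a * \<phi> (smap a x))"
    using D_conv_dil a by blast
  then show "(\<lambda>k. T (\<lambda>x. Ca a * \<phi>s k (smap a x))) \<longlonglongrightarrow> T (\<lambda>x. Ca a * \<phi> (smap a x))"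
    using T unfolding distribution_def by blast
qed

definition monoC :: "('n::finite \<Rightarrow> nat) \<Rightarrow> real^'n \<Rightarrow> complex" where
  "monoC \<alpha> x = complex_of_real (\<Prod>i\<in>UNIV. (x$i) ^ \<alpha> i)"

lemma mono_cont: "continuous_on UNIV (monoC \<alpha>)"
  unfolding monoC_def by (intro continuous_intros)

lemma monomial_eq: "monomial_distr \<alpha> \<phi> = (if test_fun \<phi> then LINT x|lborel. monoC \<alpha> x * \<phi> x else 0)"
  by (simp add: monomial_distr_def monoC_def)

lemma integrable_test:
  fixes p :: "real^'n::finite \<Rightarrow> complex"
  assumes "test_fun \<phi>" "continuous_on UNIV p"
  shows "integrable lborel (\<lambda>x. p x * \<phi> x)"
proof -
  let ?K = "closure {x. \<phi> x \<noteq> 0}"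
  have K: "compact ?K" using assms(1) unfolding test_fun_def by (simp add: compact_closure)
  have c: "continuous_on UNIV (\<lambda>x. p x * \<phi> x)"
    by (intro continuous_on_mult assms test_cont)
  have "integrable lborel (\<lambda>x. indicator ?K x *\<^sub>R (p x * \<phi> x))"
    by (rule borel_integrable_compact[OF K continuous_on_subset[OF c subset_UNIV]])
  moreover have "(\<lambda>x. indicator ?K x *\<^sub>R (p x * \<phi> x)) = (\<lambda>x. p x * \<phi> x)"
  proof
    fix x show "indicator ?K x *\<^sub>R (p x * \<phi> x) = p x * \<phi> x"
      using closure_subset[of "{x. \<phi> x \<noteq> 0}"] by (cases "x \<in> ?K") auto
  qed
  ultimately show ?thesis by simp
qed

lemma int_conv:
  fixes p :: "real^'n::finite \<Rightarrow> complex"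
  assumes D: "D_conv \<phi>s \<phi>" and p: "continuous_on UNIV p"
  shows "(\<lambda>k. LINT x|lborel. p x * \<phi>s k x) \<longlonglongrightarrow> (LINT x|lborel. p x * \<phi> x)"
proof -
  from D have t: "\<And>k. test_fun (\<phi>s k)" "test_fun \<phi>" and
    ul0: "uniform_limit UNIV (\<lambda>k. iter_partial [] (\<phi>s k)) (iter_partial [] \<phi>) sequentially"
    unfolding D_conv_def by blast+
  then have ul: "uniform_limit UNIV \<phi>s \<phi> sequentially" by simp
  from D obtain K0 where K0: "compact K0" "\<And>k. {x. \<phi>s k x \<noteq> 0} \<subseteq> K0"
    unfolding D_conv_def by auto
  define K where "K = K0 \<union> closure {x. \<phi> x \<noteq> 0}"
  have K: "compact K" using K0(1) t(2) unfolding K_def test_fun_def by (simp add: compact_Un compact_closure)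
  have out: "x \<notin> K \<Longrightarrow> \<phi>s k x = 0 \<and> \<phi> x = 0" for x k
    using K0(2)[of k] closure_subset[of "{x. \<phi> x \<noteq> 0}"] unfolding K_def by auto
  define C where "C = (LINT x|lborel. indicator K x * norm (p x))"
  have intC: "integrable lborel (\<lambda>x. indicator K x * norm (p x))"
    using borel_integrable_compact[OF K, of "\<lambda>x. norm (p x)"] continuous_on_subset[OF p subset_UNIV]
    by (simp add: continuous_on_norm)
  have C0: "C \<ge> 0" unfolding C_def by (intro integral_nonneg_AE) auto
  have int1: "\<And>k. integrable lborel (\<lambda>x. p x * \<phi>s k x)" "integrable lborel (\<lambda>x. p x * \<phi> x)"
    using integrable_test t p by auto
  show ?thesis
  proof (rule metric_LIMSEQ_I)
    fix r :: real assume r: "r > 0"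
    define e where "e = r / (C + 1)"
    have e: "e > 0" using r C0 unfolding e_def by simp
    have "\<forall>\<^sub>F n in sequentially. \<forall>x\<in>UNIV. dist (\<phi>s n x) (\<phi> x) < e"
      using ul e unfolding uniform_limit_iff by blast
    then obtain N where N: "\<And>n. n \<ge> N \<Longrightarrow> \<forall>x. dist (\<phi>s n x) (\<phi> x) < e"
      unfolding eventually_sequentially by blast
    have "dist (LINT x|lborel. p x * \<phi>s n x) (LINT x|lborel. p x * \<phi> x) < r" if n: "n \<ge> N" for n
    proof -
      have "dist (LINT x|lborel. p x * \<phi>s n x) (LINT x|lborel. p x * \<phi> x)
          = norm (LINT x|lborel. p x * \<phi>s n x - p x * \<phi> x)"
        by (simp add: dist_norm Bochner_Integration.integral_diff[OF int1])
      also have "\<dots> \<le> (LINT x|lborel. norm (p x * \<phi>s n x - p x * \<phi> x))"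
        by (rule integral_norm_bound)
      also have "\<dots> \<le> (LINT x|lborel. e * (indicator K x * norm (p x)))"
      proof (rule integral_mono)
        show "integrable lborel (\<lambda>x. norm (p x * \<phi>s n x - p x * \<phi> x))"
          using int1 by (intro integrable_norm Bochner_Integration.integrable_diff) auto
        show "integrable lborel (\<lambda>x. e * (indicator K x * norm (p x)))"
          using intC by simp
        fix x
        show "norm (p x * \<phi>s n x - p x * \<phi> x) \<le> e * (indicator K x * norm (p x))"
        proof (cases "x \<in> K")
          case True
          have "norm (p x * \<phi>s n x - p x * \<phi> x) = norm (p x) * dist (\<phi>s n x) (\<phi> x)"
            by (simp add: dist_norm norm_mult[symmetric] right_diff_distrib)
          also have "\<dots> \<le> norm (p x) * e"
            using N[OF n] by (intro mult_left_mono) (auto simp: less_imp_le)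
          finally show ?thesis using True by (simp add: mult.commute)
        next
          case False then show ?thesis using out[OF False, of n] by simp
        qed
      qed
      also have "\<dots> = e * C" unfolding C_def by simp
      also have "\<dots> < r"
      proof -
        have "e * C = r * (C / (C + 1))" unfolding e_def by simp
        also have "\<dots> < r * 1" using r C0 by (intro mult_strict_left_mono) auto
        finally show ?thesis by simp
      qed
      finally show ?thesis .
    qed
    then show "\<exists>no. \<forall>n\<ge>no. dist (LINT x|lborel. p x * \<phi>s n x) (LINT x|lborel. p x * \<phi> x) < r"
      by blast
  qed
qed

lemma monomial_distribution: "distribution (monomial_distr (\<alpha> :: 'n::finite \<Rightarrow> nat))"
  unfolding distribution_def
proof (intro conjI allI impI)
  fix \<phi> :: "'n testfun" assume "\<not> test_fun \<phi>"
  then show "monomial_distr \<alpha> \<phi> = 0" by (simp add: monomial_eq)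
next
  fix \<phi> \<psi> :: "'n testfun" assume t: "test_fun \<phi>" "test_fun \<psi>"
  have i: "integrable lborel (\<lambda>x. monoC \<alpha> x * \<phi> x)" "integrable lborel (\<lambda>x. monoC \<alpha> x * \<psi> x)"
    using integrable_test[OF _ mono_cont] t by auto
  have "(LINT x|lborel. monoC \<alpha> x * (\<phi> x + \<psi> x)) = (LINT x|lborel. monoC \<alpha> x * \<phi> x + monoC \<alpha> x * \<psi> x)"
    by (simp add: distrib_left)
  also have "\<dots> = (LINT x|lborel. monoC \<alpha> x * \<phi> x) + (LINT x|lborel. monoC \<alpha> x * \<psi> x)"
    by (rule Bochner_Integration.integral_add[OF i])
  finally show "monomial_distr \<alpha> (\<lambda>x. \<phi> x + \<psi> x) = monomial_distr \<alpha> \<phi> + monomial_distr \<alpha> \<psi>"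
    using t test_add[OF t] by (simp add: monomial_eq)
next
  fix \<phi> :: "'n testfun" and c assume t: "test_fun \<phi>"
  have "(LINT x|lborel. monoC \<alpha> x * (c * \<phi> x)) = (LINT x|lborel. c * (monoC \<alpha> x * \<phi> x))"
    by (simp add: mult.left_commute)
  also have "\<dots> = c * (LINT x|lborel. monoC \<alpha> x * \<phi> x)"
    by (rule integral_mult_right_zero)
  finally show "monomial_distr \<alpha> (\<lambda>x. c * \<phi> x) = c * monomial_distr \<alpha> \<phi>"
    using t test_cmult[OF t] by (simp add: monomial_eq)
next
  fix \<phi>s :: "nat \<Rightarrow> 'n testfun" and \<phi> assume D: "D_conv \<phi>s \<phi>"
  then have t: "\<And>k. test_fun (\<phi>s k)" "test_fun \<phi>" unfolding D_conv_def by auto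
  show "(\<lambda>k. monomial_distr \<alpha> (\<phi>s k)) \<longlonglongrightarrow> monomial_distr \<alpha> \<phi>"
    using int_conv[OF D mono_cont] t by (simp add: monomial_eq)
qed

lemma dist_zero: "distribution (\<lambda>\<phi>. 0)"
  unfolding distribution_def by simp

lemma dist_add: "distribution T \<Longrightarrow> distribution S \<Longrightarrow> distribution (\<lambda>\<phi>. T \<phi> + S \<phi>)"
  unfolding distribution_def by (auto intro: tendsto_add simp: algebra_simps)

lemma dist_cmult: "distribution T \<Longrightarrow> distribution (\<lambda>\<phi>. c * T \<phi>)"
  unfolding distribution_def by (auto intro: tendsto_mult_left simp: algebra_simps)

inductive pd :: "('n::finite) distr \<Rightarrow> bool" where
  pd0: "pd (\<lambda>\<phi>. 0)"
| pdS: "pd Q \<Longrightarrow> pd (\<lambda>\<phi>. Q \<phi> + c * monomial_distr \<alpha> \<phi>)"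

lemma pd_dist: "pd Q \<Longrightarrow> distribution Q"
  by (induction rule: pd.induct) (auto intro!: dist_add dist_cmult dist_zero monomial_distribution)

lemma pd_add: "pd R \<Longrightarrow> pd Q \<Longrightarrow> pd (\<lambda>\<phi>. Q \<phi> + R \<phi>)"
proof (induction rule: pd.induct)
  case pd0 then show ?case by simp
next
  case (pdS R c \<alpha>)
  have "pd (\<lambda>\<phi>. (Q \<phi> + R \<phi>) + c * monomial_distr \<alpha> \<phi>)" using pdS by (intro pd.pdS) auto
  then show ?case by (simp add: add.assoc)
qed

lemma pd_cmult: "pd Q \<Longrightarrow> pd (\<lambda>\<phi>. c * Q \<phi>)"
proof (induction rule: pd.induct)
  case pd0 then show ?case by (simp add: pd.pd0)
next
  case (pdS Q d \<alpha>)
  have "pd (\<lambda>\<phi>. c * Q \<phi> + (c * d) * monomial_distr \<alpha> \<phi>)" using pdS by (intro pd.pdS) auto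
  then show ?case by (simp add: algebra_simps)
qed

lemma pd_mono: "pd (monomial_distr \<alpha>)"
  using pd.pdS[OF pd.pd0, of 1 \<alpha>] by simp



lemma Basis_cart: "(Basis :: (real^'n::finite) set) = (\<lambda>i. axis i 1) ` UNIV"
  by (auto simp: Basis_vec_def)

lemma inj_axis1: "inj (\<lambda>i::'n::finite. axis i (1::real))"
  by (auto intro!: injI simp: axis_eq_axis)

definition mul :: "real^'n::finite \<Rightarrow> real^'n \<Rightarrow> real^'n" where
  "mul a x = (\<chi> i. a$i * x$i)"

lemma mul_cont: "continuous_on UNIV (mul a)"
proof -
  have "linear (mul a)" by (auto intro!: linearI simp: mul_def vec_eq_iff algebra_simps)
  then show ?thesis using linear_continuous_on linear_conv_bounded_linear by blast
qed

lemma smap_mul: "\<forall>i. a$i \<noteq> 0 \<Longrightarrow> smap a (mul a y) = y"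
  by (simp add: smap_def mul_def vec_eq_iff)

lemma lborel_mul:
  fixes a :: "real^'n::finite"
  assumes a: "\<forall>i. a$i \<noteq> 0"
  shows "lborel = density (distr lborel borel (mul a)) (\<lambda>_. ennreal (\<Prod>i\<in>UNIV. \<bar>a$i\<bar>))"
proof -
  have "lborel = density (distr lborel borel (\<lambda>x. 0 + (\<Sum>j\<in>Basis. ((a \<bullet> j) * (x \<bullet> j)) *\<^sub>R j))) (\<lambda>_. (\<Prod>j\<in>Basis. \<bar>a \<bullet> j\<bar>))"
    by (rule lborel_affine_euclidean) (use a in \<open>auto simp: Basis_cart inner_axis\<close>)
  moreover have "(\<lambda>x. 0 + (\<Sum>j\<in>Basis. ((a \<bullet> j) * (x \<bullet> j)) *\<^sub>R j)) = mul a"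
  proof
    fix x :: "real^'n"
    show "0 + (\<Sum>j\<in>Basis. ((a \<bullet> j) * (x \<bullet> j)) *\<^sub>R j) = mul a x"
      unfolding vec_eq_iff
    proof
      fix k
      have "(\<Sum>j\<in>Basis. ((a \<bullet> j) * (x \<bullet> j)) *\<^sub>R j) $ k = (\<Sum>i\<in>UNIV. ((a$i) * (x$i)) * (axis i (1::real)) $ k)"
        by (simp add: Basis_cart sum.reindex[OF inj_axis1] inner_axis)
      also have "\<dots> = a$k * x$k"
        by (simp add: axis_def if_distrib cong: if_cong)
      finally show "(0 + (\<Sum>j\<in>Basis. ((a \<bullet> j) * (x \<bullet> j)) *\<^sub>R j)) $ k = mul a x $ k"
        by (simp add: mul_def)
    qed
  qed
  moreover have "(\<Prod>j\<in>Basis. \<bar>a \<bullet> j\<bar>) = (\<Prod>i\<in>UNIV. \<bar>a$i\<bar>)"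
    by (simp add: Basis_cart prod.reindex[OF inj_axis1] inner_axis)
  ultimately show ?thesis by simp
qed

lemma int_mul:
  fixes g :: "real^'n::finite \<Rightarrow> complex"
  assumes a: "\<forall>i. a$i \<noteq> 0" and g: "continuous_on UNIV g"
  shows "(LINT x|lborel. g x) = (\<Prod>i\<in>UNIV. \<bar>a$i\<bar>) *\<^sub>R (LINT y|lborel. g (mul a y))"
proof -
  let ?P = "\<Prod>i\<in>UNIV. \<bar>a$i\<bar>"
  have gm: "g \<in> borel_measurable borel" by (rule borel_measurable_continuous_onI[OF g])
  have m: "mul a \<in> measurable lborel borel"
    using borel_measurable_continuous_onI[OF mul_cont] by simp
  have "(LINT x|lborel. g x) = (LINT x|density (distr lborel borel (mul a)) (\<lambda>_. ennreal ?P). g x)"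
    by (subst lborel_mul[OF a]) (rule refl)
  also have "\<dots> = (LINT x|distr lborel borel (mul a). ?P *\<^sub>R g x)"
    by (rule integral_density) (auto simp: gm prod_nonneg)
  also have "\<dots> = (LINT y|lborel. ?P *\<^sub>R g (mul a y))"
    by (rule integral_distr[OF m]) (use gm in simp)
  also have "\<dots> = ?P *\<^sub>R (LINT y|lborel. g (mul a y))"
    by simp
  finally show ?thesis .
qed

lemma P_sigma:
  fixes a :: "real^'n::finite"
  assumes a: "\<forall>i. a$i \<noteq> 0"
  shows "(\<Prod>i\<in>UNIV. \<bar>a$i\<bar>) * (sigma_sign a / (\<Prod>i\<in>UNIV. a$i)) = 1"
proof -
  have e: "(\<Prod>i\<in>UNIV. \<bar>a$i\<bar>) * sigma_sign a = (\<Prod>i\<in>UNIV. a$i)"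
    unfolding sigma_sign_def prod.distrib[symmetric] by simp
  have nz: "(\<Prod>i\<in>UNIV. a$i) \<noteq> 0" using a by simp
  have "(\<Prod>i\<in>UNIV. \<bar>a$i\<bar>) * (sigma_sign a / (\<Prod>i\<in>UNIV. a$i)) = ((\<Prod>i\<in>UNIV. \<bar>a$i\<bar>) * sigma_sign a) / (\<Prod>i\<in>UNIV. a$i)"
    by simp
  also have "\<dots> = 1" using e nz by simp
  finally show ?thesis .
qed

lemma mono_mul: "monoC \<alpha> (mul a y) = complex_of_real (\<Prod>i\<in>UNIV. a$i ^ \<alpha> i) * monoC \<alpha> y"
  by (simp add: monoC_def mul_def power_mult_distrib prod.distrib)

lemma dil_mono:
  fixes a :: "real^'n::finite" and \<alpha> :: "'n \<Rightarrow> nat"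
  assumes a: "\<forall>i. a$i \<noteq> 0"
  shows "dilation a (monomial_distr \<alpha>) = (\<lambda>\<phi>. complex_of_real (\<Prod>i\<in>UNIV. a$i ^ \<alpha> i) * monomial_distr \<alpha> \<phi>)"
proof
  fix \<phi> :: "'n testfun"
  let ?aa = "complex_of_real (\<Prod>i\<in>UNIV. a$i ^ \<alpha> i)"
  let ?P = "\<Prod>i\<in>UNIV. \<bar>a$i\<bar>"
  show "dilation a (monomial_distr \<alpha>) \<phi> = ?aa * monomial_distr \<alpha> \<phi>"
  proof (cases "test_fun \<phi>")
    case False
    then show ?thesis using test_dil_iff[OF a] by (simp add: dil_eq monomial_eq)
  next
    case True
    have tt: "test_fun (\<lambda>x. Ca a * \<phi> (smap a x))" using True test_dil_iff[OF a] by simp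
    have gc: "continuous_on UNIV (\<lambda>x. monoC \<alpha> x * (Ca a * \<phi> (smap a x)))"
      by (intro continuous_on_mult mono_cont continuous_on_const
          continuous_on_compose2[OF test_cont[OF True] linear_continuous_on[OF smap_bl]]) auto
    have "(LINT x|lborel. monoC \<alpha> x * (Ca a * \<phi> (smap a x)))
        = ?P *\<^sub>R (LINT y|lborel. monoC \<alpha> (mul a y) * (Ca a * \<phi> (smap a (mul a y))))"
      by (rule int_mul[OF a gc])
    also have "\<dots> = ?P *\<^sub>R (LINT y|lborel. (?aa * Ca a) * (monoC \<alpha> y * \<phi> y))"
      using smap_mul[OF a] by (simp add: mono_mul mult_ac)
    also have "\<dots> = ?P *\<^sub>R ((?aa * Ca a) * (LINT y|lborel. monoC \<alpha> y * \<phi> y))"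
      by (simp only: integral_mult_right_zero)
    also have "\<dots> = ?aa * (complex_of_real (?P * (sigma_sign a / (\<Prod>i\<in>UNIV. a$i)))) * (LINT y|lborel. monoC \<alpha> y * \<phi> y)"
      by (simp add: scaleR_conv_of_real Ca_def mult_ac)
    also have "\<dots> = ?aa * (LINT y|lborel. monoC \<alpha> y * \<phi> y)"
    proof -
      have h: "complex_of_real (?P * (sigma_sign a / (\<Prod>i\<in>UNIV. a$i))) = 1"
        by (simp only: P_sigma[OF a] of_real_1)
      show ?thesis by (simp only: h mult_1_right)
    qed
    finally show ?thesis using True tt by (simp add: dil_eq monomial_eq)
  qed
qed



definition lc :: "(nat \<Rightarrow> complex) \<Rightarrow> ('a \<Rightarrow> complex) list \<Rightarrow> ('a \<Rightarrow> complex)" where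
  "lc c B = (\<lambda>x. \<Sum>i<length B. c i * (B!i) x)"

definition spanL :: "('a \<Rightarrow> complex) list \<Rightarrow> ('a \<Rightarrow> complex) set" where
  "spanL B = {lc c B | c. True}"

fun indep :: "('a \<Rightarrow> complex) list \<Rightarrow> bool" where
  "indep [] = True"
| "indep (\<psi> # B) = (indep B \<and> \<psi> \<notin> spanL B)"

lemma lc_Cons: "lc c (\<phi> # B) = (\<lambda>x. c 0 * \<phi> x + lc (\<lambda>i. c (Suc i)) B x)"
  unfolding lc_def length_Cons sum.lessThan_Suc_shift by simp

lemma span_mono: "f \<in> spanL B \<Longrightarrow> f \<in> spanL (\<phi> # B)"
proof -
  assume "f \<in> spanL B"
  then obtain c where "f = lc c B" unfolding spanL_def by blast
  then have "f = lc (case_nat 0 c) (\<phi> # B)" by (simp add: lc_Cons)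
  then show ?thesis unfolding spanL_def by blast
qed

lemma span_self: "\<phi> \<in> spanL (\<phi> # B)"
proof -
  have "\<phi> = lc (case_nat 1 (\<lambda>_. 0)) (\<phi> # B)" unfolding lc_Cons by (simp add: lc_def)
  then show ?thesis unfolding spanL_def by blast
qed

locale interp =
  fixes V :: "('a \<Rightarrow> complex) set" and P :: "(('a \<Rightarrow> complex) \<Rightarrow> complex) set"
  assumes V0: "(\<lambda>x. 0) \<in> V"
  and Vadd: "f \<in> V \<Longrightarrow> g \<in> V \<Longrightarrow> (\<lambda>x. f x + g x) \<in> V"
  and Vsc: "f \<in> V \<Longrightarrow> (\<lambda>x. c * f x) \<in> V"
  and Padd_lin: "R \<in> P \<Longrightarrow> f \<in> V \<Longrightarrow> g \<in> V \<Longrightarrow> R (\<lambda>x. f x + g x) = R f + R g"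
  and Psc_lin: "R \<in> P \<Longrightarrow> f \<in> V \<Longrightarrow> R (\<lambda>x. c * f x) = c * R f"
  and P0: "(\<lambda>f. 0) \<in> P"
  and Padd: "R \<in> P \<Longrightarrow> S \<in> P \<Longrightarrow> (\<lambda>f. R f + S f) \<in> P"
  and Psc: "R \<in> P \<Longrightarrow> (\<lambda>f. c * R f) \<in> P"
  and sep: "f \<in> V \<Longrightarrow> (\<forall>R\<in>P. R f = 0) \<Longrightarrow> f = (\<lambda>x. 0)"
begin

lemma psum_V: "set B \<subseteq> V \<Longrightarrow> n \<le> length B \<Longrightarrow> (\<lambda>x. \<Sum>i<n. c i * (B!i) x) \<in> V"
proof (induction n)
  case 0 then show ?case using V0 by simp
next
  case (Suc n)
  have "B!n \<in> V" using Suc by auto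
  then have "(\<lambda>x. (\<Sum>i<n. c i * (B!i) x) + c n * (B!n) x) \<in> V"
    using Suc by (intro Vadd Vsc) auto
  then show ?case by simp
qed

lemma lc_V: "set B \<subseteq> V \<Longrightarrow> lc c B \<in> V"
  unfolding lc_def using psum_V by blast

lemma lin_psum:
  assumes Ga: "\<And>f g. f \<in> V \<Longrightarrow> g \<in> V \<Longrightarrow> G (\<lambda>x. f x + g x) = G f + G g"
    and Gs: "\<And>f c. f \<in> V \<Longrightarrow> G (\<lambda>x. c * f x) = c * G f"
    and B: "set B \<subseteq> V"
  shows "n \<le> length B \<Longrightarrow> G (\<lambda>x. \<Sum>i<n. c i * (B!i) x) = (\<Sum>i<n. c i * G (B!i))"
proof (induction n)
  case 0
  have "G (\<lambda>x. 0 * 0) = 0 * G (\<lambda>x. 0)" by (rule Gs[OF V0])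
  then show ?case by simp
next
  case (Suc n)
  have Bn: "B!n \<in> V" using Suc B by auto
  have nl: "n \<le> length B" using Suc by simp
  have "G (\<lambda>x. (\<Sum>i<n. c i * (B!i) x) + c n * (B!n) x) = G (\<lambda>x. \<Sum>i<n. c i * (B!i) x) + G (\<lambda>x. c n * (B!n) x)"
    by (rule Ga[OF psum_V[OF B nl] Vsc[OF Bn]])
  also have "\<dots> = (\<Sum>i<n. c i * G (B!i)) + c n * G (B!n)"
    using Suc Gs[OF Bn] by simp
  finally show ?case by simp
qed

lemma lin_lc:
  assumes Ga: "\<And>f g. f \<in> V \<Longrightarrow> g \<in> V \<Longrightarrow> G (\<lambda>x. f x + g x) = G f + G g"
    and Gs: "\<And>f c. f \<in> V \<Longrightarrow> G (\<lambda>x. c * f x) = c * G f"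
    and B: "set B \<subseteq> V"
  shows "G (lc c B) = (\<Sum>i<length B. c i * G (B!i))"
  unfolding lc_def by (rule lin_psum[OF Ga Gs B order_refl])

lemma P_lc: "R \<in> P \<Longrightarrow> set B \<subseteq> V \<Longrightarrow> R (lc c B) = (\<Sum>i<length B. c i * R (B!i))"
  by (rule lin_lc) (auto intro: Padd_lin Psc_lin)

lemma P_sum: "(\<And>i. i < (n::nat) \<Longrightarrow> D i \<in> P) \<Longrightarrow> (\<lambda>g. \<Sum>i<n. c i * D i g) \<in> P"
proof (induction n)
  case 0 then show ?case using P0 by simp
next
  case (Suc n)
  have "(\<lambda>g. (\<Sum>i<n. c i * D i g) + c n * D n g) \<in> P"
    using Suc by (intro Padd Psc) auto
  then show ?case by simp
qed

lemma dual: "indep B \<Longrightarrow> set B \<subseteq> V \<Longrightarrow> \<forall>v. \<exists>Q\<in>P. \<forall>j<length B. Q (B!j) = v j"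
proof (induction B)
  case Nil then show ?case using P0 by auto
next
  case (Cons \<psi> B)
  have IH: "\<forall>v. \<exists>Q\<in>P. \<forall>j<length B. Q (B!j) = v j" using Cons by auto
  have psi: "\<psi> \<in> V" "\<psi> \<notin> spanL B" and BV: "set B \<subseteq> V" using Cons by auto
  have "\<exists>Rs\<in>P. (\<forall>j<length B. Rs (B!j) = 0) \<and> Rs \<psi> = 1"
  proof (rule ccontr)
    assume no: "\<not> ?thesis"
    have kill: "R \<psi> = 0" if R: "R \<in> P" "\<forall>j<length B. R (B!j) = 0" for R
    proof (rule ccontr)
      assume nz: "R \<psi> \<noteq> 0"
      have "(\<lambda>g. (1 / R \<psi>) * R g) \<in> P" using R by (intro Psc)
      moreover have "\<forall>j<length B. (1 / R \<psi>) * R (B!j) = 0" using R by simp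
      moreover have "(1 / R \<psi>) * R \<psi> = 1" using nz by simp
      ultimately have "\<exists>Rs\<in>P. (\<forall>j<length B. Rs (B!j) = 0) \<and> Rs \<psi> = 1"
        by (intro bexI[of _ "\<lambda>g. (1 / R \<psi>) * R g"]) auto
      then show False using no by simp
    qed
    have "\<forall>i. \<exists>Q. Q \<in> P \<and> (\<forall>j<length B. Q (B!j) = (if i = j then 1 else 0))"
    proof
      fix i
      obtain Q where "Q \<in> P" "\<forall>j<length B. Q (B!j) = (if i = j then 1 else 0)"
        using IH[rule_format, of "\<lambda>j. if i = j then 1 else 0"] by blast
      then show "\<exists>Q. Q \<in> P \<and> (\<forall>j<length B. Q (B!j) = (if i = j then 1 else 0))" by blast
    qed
    from choice[OF this] obtain D where D0: "\<forall>i. D i \<in> P \<and> (\<forall>j<length B. D i (B!j) = (if i = j then 1 else 0))"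
      by blast
    then have D: "\<And>i. D i \<in> P" "\<And>i j. j < length B \<Longrightarrow> D i (B!j) = (if i = j then 1 else 0)"
      by auto
    define c where "c i = D i \<psi>" for i
    define f where "f = (\<lambda>x. \<psi> x + (-1) * lc c B x)"
    have fV: "f \<in> V" unfolding f_def using psi BV by (intro Vadd Vsc lc_V)
    have "R f = 0" if R: "R \<in> P" for R
    proof -
      let ?R' = "\<lambda>g. R g + (-1) * (\<Sum>i<length B. R (B!i) * D i g)"
      have R'P: "?R' \<in> P" using R D(1) by (intro Padd Psc P_sum)
      have "?R' (B!j) = 0" if j: "j < length B" for j
      proof -
        have "(\<Sum>i<length B. R (B!i) * D i (B!j)) = (\<Sum>i<length B. if i = j then R (B!i) else 0)"
          using D(2)[OF j] by (intro sum.cong) auto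
        also have "\<dots> = R (B!j)" using j by simp
        finally show ?thesis by simp
      qed
      then have "?R' \<psi> = 0" using kill[OF R'P] by blast
      then have e1: "R \<psi> = (\<Sum>i<length B. R (B!i) * D i \<psi>)" by simp
      have "R f = R \<psi> + R (\<lambda>x. (-1) * lc c B x)"
        unfolding f_def by (rule Padd_lin[OF R psi(1) Vsc[OF lc_V[OF BV]]])
      also have "\<dots> = R \<psi> + (-1) * R (lc c B)"
        by (simp only: Psc_lin[OF R lc_V[OF BV]])
      also have "\<dots> = 0" using e1 P_lc[OF R BV] by (simp add: c_def mult.commute)
      finally show ?thesis .
    qed
    then have "f = (\<lambda>x. 0)" using sep[OF fV] by blast
    then have "\<psi> = lc c B" unfolding f_def by (simp add: fun_eq_iff)
    then have "\<psi> \<in> spanL B" unfolding spanL_def by blast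
    then show False using psi by blast
  qed
  then obtain Rs where Rs: "Rs \<in> P" "\<forall>j<length B. Rs (B!j) = 0" "Rs \<psi> = 1" by blast
  show ?case
  proof
    fix v :: "nat \<Rightarrow> complex"
    obtain Q0 where Q0: "Q0 \<in> P" "\<forall>j<length B. Q0 (B!j) = v (Suc j)"
      using IH[rule_format, of "\<lambda>j. v (Suc j)"] by blast
    let ?Q = "\<lambda>g. Q0 g + (v 0 - Q0 \<psi>) * Rs g"
    have QP: "?Q \<in> P" using Q0 Rs by (intro Padd Psc)
    have QV: "\<forall>j<length (\<psi> # B). ?Q ((\<psi> # B)!j) = v j"
    proof (intro allI impI)
      fix j assume j: "j < length (\<psi> # B)"
      show "?Q ((\<psi> # B)!j) = v j"
      proof (cases j)
        case 0 then show ?thesis using Rs by simp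
      next
        case (Suc k) then show ?thesis using Rs Q0 j by simp
      qed
    qed
    show "\<exists>Q\<in>P. \<forall>j<length (\<psi> # B). Q ((\<psi> # B)!j) = v j"
    proof (rule bexI[where x="?Q"])
      show "?Q \<in> P" by (rule QP)
      show "\<forall>j<length (\<psi> # B). ?Q ((\<psi> # B)!j) = v j" using QV by simp
    qed
  qed
qed

lemma indep_exists: "set L \<subseteq> V \<Longrightarrow> \<exists>B. indep B \<and> set B \<subseteq> V \<and> set L \<subseteq> spanL B"
proof (induction L)
  case Nil then show ?case by (intro exI[of _ "[]"]) simp
next
  case (Cons \<phi> L)
  then obtain B where B: "indep B" "set B \<subseteq> V" "set L \<subseteq> spanL B" by auto
  show ?case
  proof (cases "\<phi> \<in> spanL B")
    case True then show ?thesis using B by auto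
  next
    case False
    have "indep (\<phi> # B)" using B False by simp
    moreover have "set (\<phi> # B) \<subseteq> V" using B Cons by auto
    moreover have "set (\<phi> # L) \<subseteq> spanL (\<phi> # B)" using B(3) by (auto intro: span_mono span_self)
    ultimately show ?thesis by blast
  qed
qed

theorem interpolate:
  assumes F: "finite F" "F \<subseteq> V"
    and Ta: "\<And>f g. f \<in> V \<Longrightarrow> g \<in> V \<Longrightarrow> T (\<lambda>x. f x + g x) = T f + T g"
    and Ts: "\<And>f c. f \<in> V \<Longrightarrow> T (\<lambda>x. c * f x) = c * T f"
  shows "\<exists>Q\<in>P. \<forall>\<phi>\<in>F. Q \<phi> = T \<phi>"
proof -
  obtain L where L: "set L = F" using F(1) finite_list by blast
  obtain B where B: "indep B" "set B \<subseteq> V" "F \<subseteq> spanL B" using indep_exists[of L] L F(2) by auto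
  obtain Q where Q: "Q \<in> P" "\<forall>j<length B. Q (B!j) = T (B!j)" using dual[OF B(1,2), rule_format, of "\<lambda>j. T (B!j)"] by blast
  have "Q \<phi> = T \<phi>" if phi: "\<phi> \<in> F" for \<phi>
  proof -
    obtain c where c: "\<phi> = lc c B" using B(3) phi unfolding spanL_def by blast
    have "Q \<phi> = (\<Sum>i<length B. c i * Q (B!i))" using c P_lc[OF Q(1) B(2)] by simp
    also have "\<dots> = (\<Sum>i<length B. c i * T (B!i))" using Q(2) by simp
    also have "\<dots> = T \<phi>"
    proof -
      have "T (lc c B) = (\<Sum>i<length B. c i * T (B!i))"
        by (rule lin_lc) (simp_all add: Ta Ts B(2))
      then show ?thesis using c by simp
    qed
    finally show ?thesis .
  qed
  then show ?thesis by (intro bexI[OF _ Q(1)]) blast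
qed

end



definition mono_r :: "('n::finite \<Rightarrow> nat) \<Rightarrow> real^'n \<Rightarrow> real" where
  "mono_r \<alpha> x = (\<Prod>i\<in>UNIV. (x$i) ^ \<alpha> i)"

definition polyL :: "(('n::finite \<Rightarrow> nat) \<times> real) list \<Rightarrow> real^'n \<Rightarrow> real" where
  "polyL xs x = (\<Sum>p\<leftarrow>xs. snd p * mono_r (fst p) x)"

lemma mono_r_add: "mono_r (\<lambda>i. \<alpha> i + \<beta> i) x = mono_r \<alpha> x * mono_r \<beta> x"
  by (simp add: mono_r_def power_add prod.distrib)

lemma polyL_append: "polyL (xs @ ys) x = polyL xs x + polyL ys x"
  by (simp add: polyL_def)

definition pmul :: "(('n::finite \<Rightarrow> nat) \<times> real) list \<Rightarrow> (('n \<Rightarrow> nat) \<times> real) list \<Rightarrow> (('n \<Rightarrow> nat) \<times> real) list" where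
  "pmul xs ys = concat (map (\<lambda>p. map (\<lambda>q. ((\<lambda>i. fst p i + fst q i), snd p * snd q)) ys) xs)"

lemma polyL_pmul1: "polyL (map (\<lambda>q. ((\<lambda>i. fst p i + fst q i), snd p * snd q)) ys) x = snd p * mono_r (fst p) x * polyL ys x"
  by (induction ys) (simp_all add: polyL_def mono_r_add algebra_simps)

lemma polyL_pmul: "polyL (pmul xs ys) x = polyL xs x * polyL ys x"
proof (induction xs)
  case Nil then show ?case by (simp add: pmul_def polyL_def)
next
  case (Cons p xs)
  have "polyL (pmul (p # xs) ys) x = polyL (map (\<lambda>q. ((\<lambda>i. fst p i + fst q i), snd p * snd q)) ys) x + polyL (pmul xs ys) x"
    by (simp add: pmul_def polyL_append)
  also have "\<dots> = snd p * mono_r (fst p) x * polyL ys x + polyL xs x * polyL ys x"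
    using Cons by (simp add: polyL_pmul1)
  also have "\<dots> = polyL (p # xs) x * polyL ys x" by (simp add: polyL_def algebra_simps)
  finally show ?case .
qed

lemma mono_r_delta: "mono_r (\<lambda>j. if j = i then 1 else 0) x = x$i"
proof -
  have "mono_r (\<lambda>j. if j = i then 1 else 0) x = (\<Prod>j\<in>UNIV. if j = i then x$j else 1)"
    unfolding mono_r_def by (rule prod.cong) auto
  also have "\<dots> = x$i" by simp
  finally show ?thesis .
qed

lemma linear_polyL:
  fixes g :: "real^'n::finite \<Rightarrow> real"
  assumes "bounded_linear g"
  shows "\<exists>xs. g = polyL xs"
proof -
  obtain L where L: "set L = (UNIV :: 'n set)" "distinct L" using finite_distinct_list[of "UNIV :: 'n set"] by auto
  have lin: "linear g" using assms bounded_linear.linear by blast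
  let ?xs = "map (\<lambda>i. ((\<lambda>j. if j = i then 1 else 0), g (axis i 1))) L"
  have "g x = polyL ?xs x" for x
  proof -
    have "x = (\<Sum>i\<in>UNIV. (x$i) *\<^sub>R axis i 1)"
      using basis_expansion[of x] by (simp add: scalar_mult_eq_scaleR)
    then have "g x = g (\<Sum>i\<in>UNIV. (x$i) *\<^sub>R axis i 1)" by simp
    also have "\<dots> = (\<Sum>i\<in>UNIV. g ((x$i) *\<^sub>R axis i 1))" by (rule linear_sum[OF lin])
    also have "\<dots> = (\<Sum>i\<in>UNIV. (x$i) * g (axis i 1))" by (simp add: linear_scale[OF lin])
    also have "\<dots> = polyL ?xs x"
      unfolding polyL_def using L by (simp add: sum_list_distinct_conv_sum_set comp_def mono_r_delta mult.commute)
    finally show ?thesis .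
  qed
  then show ?thesis by blast
qed

lemma rpf_polyL:
  fixes g :: "real^'n::finite \<Rightarrow> real"
  assumes "real_polynomial_function g"
  shows "\<exists>xs. g = polyL xs"
  using assms
proof (induction rule: real_polynomial_function.induct)
  case (linear f) then show ?case by (rule linear_polyL)
next
  case (const c)
  have "(\<lambda>x. c) = polyL [((\<lambda>_. 0), c)]" by (simp add: polyL_def mono_r_def fun_eq_iff)
  then show ?case by blast
next
  case (add f g)
  then obtain xs ys where "f = polyL xs" "g = polyL ys" by blast
  then have "(\<lambda>x. f x + g x) = polyL (xs @ ys)" by (simp add: fun_eq_iff polyL_append)
  then show ?case by blast
next
  case (mult f g)
  then obtain xs ys where "f = polyL xs" "g = polyL ys" by blast
  then have "(\<lambda>x. f x * g x) = polyL (pmul xs ys)" by (simp add: fun_eq_iff polyL_pmul)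
  then show ?case by blast
qed

lemma mono_r_mono: "complex_of_real (mono_r \<alpha> x) = monoC \<alpha> x"
  by (simp add: mono_r_def monoC_def)

lemma polyL_cont: "continuous_on UNIV (\<lambda>x. complex_of_real (polyL xs x))"
  unfolding polyL_def mono_r_def
  by (induction xs) (auto intro!: continuous_intros)

lemma polyL_int0:
  fixes f :: "'n::finite testfun"
  assumes t: "test_fun f" and m: "\<forall>\<alpha>. (LINT x|lborel. monoC \<alpha> x * f x) = 0"
  shows "(LINT x|lborel. complex_of_real (polyL xs x) * f x) = 0"
proof (induction xs)
  case Nil then show ?case by (simp add: polyL_def)
next
  case (Cons p xs)
  have e: "(\<lambda>x. complex_of_real (polyL (p # xs) x) * f x)
      = (\<lambda>x. complex_of_real (snd p) * (monoC (fst p) x * f x) + complex_of_real (polyL xs x) * f x)"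
    by (simp add: polyL_def fun_eq_iff algebra_simps mono_r_mono[symmetric])
  have i1: "integrable lborel (\<lambda>x. complex_of_real (snd p) * (monoC (fst p) x * f x))"
    using integrable_test[OF t mono_cont] by simp
  have i2: "integrable lborel (\<lambda>x. complex_of_real (polyL xs x) * f x)"
    using integrable_test[OF t polyL_cont] by simp
  show ?case unfolding e Bochner_Integration.integral_add[OF i1 i2] using Cons m by simp
qed

lemma sep_lemma:
  fixes f :: "'n::finite testfun"
  assumes t: "test_fun f" and m: "\<forall>\<alpha>. (LINT x|lborel. monoC \<alpha> x * f x) = 0"
  shows "f = (\<lambda>x. 0)"
proof -
  let ?K = "closure {x. f x \<noteq> 0}"
  have K: "compact ?K" using t unfolding test_fun_def by (simp add: compact_closure)
  have out: "x \<notin> ?K \<Longrightarrow> f x = 0" for x using closure_subset[of "{x. f x \<noteq> 0}"] by auto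
  have fc: "continuous_on UNIV f" by (rule test_cont[OF t])
  have intf: "integrable lborel (\<lambda>x. norm (f x))"
    using integrable_test[OF t continuous_on_const[of UNIV 1]] by (simp add: integrable_norm)
  define I where "I = (LINT x|lborel. cnj (f x) * f x)"
  have icf: "integrable lborel (\<lambda>x. cnj (f x) * f x)"
    by (rule integrable_test[OF t]) (intro continuous_intros fc)
  have bound: "norm I \<le> 2 * e * (LINT x|lborel. norm (f x))" if e: "e > 0" for e
  proof -
    obtain g1 where g1: "real_polynomial_function g1" "\<And>x. x \<in> ?K \<Longrightarrow> \<bar>Re (cnj (f x)) - g1 x\<bar> < e"
      using Stone_Weierstrass_real_polynomial_function[OF K _ e, of "\<lambda>x. Re (cnj (f x))"]
        continuous_on_subset[OF fc subset_UNIV] by (metis continuous_on_Re continuous_on_cnj)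
    obtain g2 where g2: "real_polynomial_function g2" "\<And>x. x \<in> ?K \<Longrightarrow> \<bar>Im (cnj (f x)) - g2 x\<bar> < e"
      using Stone_Weierstrass_real_polynomial_function[OF K _ e, of "\<lambda>x. Im (cnj (f x))"]
        continuous_on_subset[OF fc subset_UNIV] by (metis continuous_on_Im continuous_on_cnj)
    obtain xs1 where x1: "g1 = polyL xs1" using rpf_polyL[OF g1(1)] by blast
    obtain xs2 where x2: "g2 = polyL xs2" using rpf_polyL[OF g2(1)] by blast
    define G where "G x = complex_of_real (g1 x) + \<i> * complex_of_real (g2 x)" for x
    have ig1: "integrable lborel (\<lambda>x. complex_of_real (g1 x) * f x)"
      unfolding x1 by (rule integrable_test[OF t polyL_cont])
    have ig2: "integrable lborel (\<lambda>x. \<i> * (complex_of_real (g2 x) * f x))"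
      unfolding x2 using integrable_test[OF t polyL_cont] by simp
    have iG: "integrable lborel (\<lambda>x. G x * f x)"
      unfolding G_def distrib_right using ig1 ig2 by (simp add: mult.assoc)
    have "(LINT x|lborel. G x * f x) = (LINT x|lborel. complex_of_real (g1 x) * f x) + \<i> * (LINT x|lborel. complex_of_real (g2 x) * f x)"
      unfolding G_def distrib_right mult.assoc Bochner_Integration.integral_add[OF ig1 ig2] by simp
    also have "\<dots> = 0" unfolding x1 x2 using polyL_int0[OF t m] by simp
    finally have G0: "(LINT x|lborel. G x * f x) = 0" .
    have "I = (LINT x|lborel. cnj (f x) * f x - G x * f x)"
      unfolding I_def Bochner_Integration.integral_diff[OF icf iG] G0 by simp
    also have "norm \<dots> \<le> (LINT x|lborel. norm (cnj (f x) * f x - G x * f x))"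
      by (rule integral_norm_bound)
    also have "\<dots> \<le> (LINT x|lborel. 2 * e * norm (f x))"
    proof (rule integral_mono)
      show "integrable lborel (\<lambda>x. norm (cnj (f x) * f x - G x * f x))"
        using icf iG by (intro integrable_norm Bochner_Integration.integrable_diff)
      show "integrable lborel (\<lambda>x. 2 * e * norm (f x))" using intf by simp
      fix x
      show "norm (cnj (f x) * f x - G x * f x) \<le> 2 * e * norm (f x)"
      proof (cases "x \<in> ?K")
        case True
        have "norm (cnj (f x) - G x) \<le> \<bar>Re (cnj (f x) - G x)\<bar> + \<bar>Im (cnj (f x) - G x)\<bar>"
          by (rule cmod_le)
        also have "\<dots> = \<bar>Re (cnj (f x)) - g1 x\<bar> + \<bar>Im (cnj (f x)) - g2 x\<bar>"
          by (simp add: G_def)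
        also have "\<dots> \<le> 2 * e" using g1(2)[OF True] g2(2)[OF True] by simp
        finally have n: "norm (cnj (f x) - G x) \<le> 2 * e" .
        have "norm (cnj (f x) * f x - G x * f x) = norm (cnj (f x) - G x) * norm (f x)"
          by (simp only: left_diff_distrib[symmetric] norm_mult)
        also have "\<dots> \<le> 2 * e * norm (f x)" using n by (intro mult_right_mono) auto
        finally show ?thesis .
      next
        case False then show ?thesis using out[OF False] by simp
      qed
    qed
    also have "\<dots> = 2 * e * (LINT x|lborel. norm (f x))" by simp
    finally show ?thesis .
  qed
  have I0: "I = 0"
  proof (rule ccontr)
    assume "I \<noteq> 0"
    then have nI: "norm I > 0" by simp
    define C where "C = (LINT x|lborel. norm (f x))"
    have C0: "C \<ge> 0" unfolding C_def by (intro integral_nonneg_AE) auto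
    define e where "e = norm I / (4 * (C + 1))"
    have e: "e > 0" using nI C0 unfolding e_def by simp
    have "norm I \<le> 2 * e * C" using bound[OF e] unfolding C_def .
    also have "\<dots> = norm I * (C / (2 * (C + 1)))" unfolding e_def using C0 by (simp add: field_simps)
    also have "\<dots> < norm I * 1"
      using nI C0 by (intro mult_strict_left_mono) (auto simp: field_simps)
    finally show False by simp
  qed
  have "(\<lambda>x. cnj (f x) * f x) = (\<lambda>x. complex_of_real ((norm (f x))\<^sup>2))"
  proof
    fix x
    show "cnj (f x) * f x = complex_of_real ((norm (f x))\<^sup>2)"
      by (metis complex_norm_square mult.commute of_real_power)
  qed
  then have "I = (LINT x|lborel. complex_of_real ((norm (f x))\<^sup>2))"
    unfolding I_def by (simp only:)
  also have "\<dots> = complex_of_real (LINT x|lborel. (norm (f x))\<^sup>2)"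
    by (rule integral_complex_of_real)
  finally have "complex_of_real (LINT x|lborel. (norm (f x))\<^sup>2) = 0" using I0 by simp
  then have int0: "(LINT x|lborel. (norm (f x))\<^sup>2) = 0" by (simp only: of_real_eq_0_iff)
  have intsq: "integrable lborel (\<lambda>x. (norm (f x))\<^sup>2)"
  proof -
    have "integrable lborel (\<lambda>x. norm (cnj (f x) * f x))" using icf by (rule integrable_norm)
    then show ?thesis by (simp add: norm_mult power2_eq_square)
  qed
  have "AE x in lborel. (norm (f x))\<^sup>2 = 0"
    using int0 integral_nonneg_eq_0_iff_AE[OF intsq] by simp
  then have "AE x in lborel. f x = 0" by simp
  then have ae: "AE x \<in> UNIV in lebesgue. x \<in> {x. f x = 0}"
    by (auto intro: AE_completion)
  have cl: "closed {x. f x = 0}"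
    using continuous_closed_preimage_constant[OF fc closed_UNIV] by simp
  show ?thesis
  proof
    fix x show "f x = 0" using mem_closed_if_AE_lebesgue_open[OF open_UNIV cl ae] by simp
  qed
qed



lemma top_distr: "topspace (distr_topology :: ('n::finite) distr topology) = distributions"
  by (simp add: distr_topology_def topspace_product_topology)

lemma haus_distr: "Hausdorff_space (distr_topology :: ('n::finite) distr topology)"
  unfolding distr_topology_def
  by (intro Hausdorff_space_subtopology) (simp add: Hausdorff_space_product_topology)

lemma interp_inst: "interp (Collect test_fun) (Collect (pd :: ('n::finite) distr \<Rightarrow> bool))"
proof
  show "(\<lambda>x. 0) \<in> Collect test_fun" using test_zero by simp
next
  fix f g :: "'n testfun" assume "f \<in> Collect test_fun" "g \<in> Collect test_fun"
  then show "(\<lambda>x. f x + g x) \<in> Collect test_fun" using test_add by simp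
next
  fix f :: "'n testfun" and c assume "f \<in> Collect test_fun"
  then show "(\<lambda>x. c * f x) \<in> Collect test_fun" using test_cmult by simp
next
  fix R :: "'n distr" and f g :: "'n testfun" assume "R \<in> Collect pd" "f \<in> Collect test_fun" "g \<in> Collect test_fun"
  then show "R (\<lambda>x. f x + g x) = R f + R g" using pd_dist unfolding distribution_def by blast
next
  fix R :: "'n distr" and f :: "'n testfun" and c assume "R \<in> Collect pd" "f \<in> Collect test_fun"
  then show "R (\<lambda>x. c * f x) = c * R f" using pd_dist unfolding distribution_def by blast
next
  show "(\<lambda>f. 0) \<in> Collect (pd :: 'n distr \<Rightarrow> bool)" using pd.pd0 by simp
next
  fix R S :: "'n distr" assume "R \<in> Collect pd" "S \<in> Collect pd"
  then show "(\<lambda>f. R f + S f) \<in> Collect pd" using pd_add by simp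
next
  fix R :: "'n distr" and c assume "R \<in> Collect pd"
  then show "(\<lambda>f. c * R f) \<in> Collect pd" using pd_cmult by simp
next
  fix f :: "'n testfun" assume f: "f \<in> Collect test_fun" and z: "\<forall>R\<in>Collect pd. R f = 0"
  have "(LINT x|lborel. monoC \<alpha> x * f x) = 0" for \<alpha>
  proof -
    have "monomial_distr \<alpha> f = 0" using z[rule_format, of "monomial_distr \<alpha>"] pd_mono[of \<alpha>] by simp
    then show ?thesis using f by (simp add: monomial_eq)
  qed
  then show "f = (\<lambda>x. 0)" using f by (intro sep_lemma) auto
qed

lemma interpolation_pd:
  fixes T :: "('n::finite) distr"
  assumes T: "T \<in> distributions" and F: "finite F"
  shows "\<exists>Q. pd Q \<and> (\<forall>\<phi>\<in>F. Q \<phi> = T \<phi>)"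
proof -
  interpret I: interp "Collect test_fun" "Collect (pd :: 'n distr \<Rightarrow> bool)" by (rule interp_inst)
  have dT: "distribution T" using T by (simp add: distributions_def)
  obtain Q where Q: "Q \<in> Collect pd" "\<forall>\<phi>\<in>F \<inter> Collect test_fun. Q \<phi> = T \<phi>"
    using I.interpolate[of "F \<inter> Collect test_fun" T] F dT unfolding distribution_def by auto
  have "Q \<phi> = T \<phi>" if "\<phi> \<in> F" for \<phi>
  proof (cases "test_fun \<phi>")
    case True then show ?thesis using Q that by auto
  next
    case False
    then show ?thesis using pd_dist[of Q] Q(1) dT unfolding distribution_def by auto
  qed
  then show ?thesis using Q(1) by auto
qed

lemma agree:
  fixes f g :: "('n::finite) distr \<Rightarrow> 'n distr"
  assumes f: "continuous_map distr_topology distr_topology f"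
    and g: "continuous_map distr_topology distr_topology g"
    and eq: "\<And>Q. pd Q \<Longrightarrow> f Q = g Q"
    and T: "T \<in> distributions"
  shows "f T = g T"
proof (rule ccontr)
  assume ne: "f T \<noteq> g T"
  have Ttop: "T \<in> topspace distr_topology" unfolding top_distr by (rule T)
  have fT: "f T \<in> topspace distr_topology" using continuous_map_image_subset_topspace[OF f] Ttop by blast
  have gT: "g T \<in> topspace distr_topology" using continuous_map_image_subset_topspace[OF g] Ttop by blast
  obtain U V where UV: "openin distr_topology U" "openin distr_topology V" "f T \<in> U" "g T \<in> V" "disjnt U V"
    using haus_distr fT gT ne unfolding Hausdorff_space_def by blast
  let ?W = "{S \<in> topspace distr_topology. f S \<in> U} \<inter> {S \<in> topspace distr_topology. g S \<in> V}"
  have "openin distr_topology ?W"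
    using openin_continuous_map_preimage[OF f UV(1)] openin_continuous_map_preimage[OF g UV(2)]
    by (rule openin_Int)
  then obtain Ob where Ob: "openin (product_topology (\<lambda>_. euclidean) UNIV) Ob" "?W = Ob \<inter> distributions"
    unfolding distr_topology_def openin_subtopology by blast
  have "T \<in> ?W" using Ttop UV by simp
  then have "T \<in> Ob" using Ob by blast
  then obtain Us where Us: "finite {i \<in> UNIV. Us i \<noteq> topspace euclidean}"
      "\<forall>i\<in>UNIV. openin euclidean (Us i)" "T \<in> Pi\<^sub>E UNIV Us" "Pi\<^sub>E UNIV Us \<subseteq> Ob"
    using Ob(1) unfolding openin_product_topology_alt by blast
  define F where "F = {i \<in> UNIV. Us i \<noteq> topspace euclidean}"
  obtain Q where Q: "pd Q" "\<forall>\<phi>\<in>F. Q \<phi> = T \<phi>"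
    using interpolation_pd[OF T, of F] Us(1) unfolding F_def by blast
  have "Q \<in> Pi\<^sub>E UNIV Us"
  proof -
    have "Q \<phi> \<in> Us \<phi>" for \<phi>
    proof (cases "\<phi> \<in> F")
      case True then show ?thesis using Q Us(3) by (auto simp: PiE_iff)
    next
      case False then show ?thesis unfolding F_def by simp
    qed
    then show ?thesis by (simp add: PiE_iff)
  qed
  then have "Q \<in> Ob" using Us(4) by blast
  moreover have "Q \<in> distributions" using pd_dist[OF Q(1)] by (simp add: distributions_def)
  ultimately have "Q \<in> ?W" using Ob(2) by blast
  then have "f Q \<in> U" "g Q \<in> V" by auto
  then show False using eq[OF Q(1)] UV(5) by (auto simp: disjnt_def)
qed

lemma cont_dil:
  fixes a :: "real^'n::finite"
  assumes a: "\<forall>i. a$i \<noteq> 0"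
  shows "continuous_map distr_topology distr_topology (dilation a)"
proof -
  have "continuous_map distr_topology (product_topology (\<lambda>_. euclidean) UNIV) (dilation a)"
    unfolding continuous_map_componentwise_UNIV
  proof
    fix \<phi> :: "'n testfun"
    have "continuous_map distr_topology euclidean (\<lambda>T. T (\<lambda>x. Ca a * \<phi> (smap a x)))"
      unfolding distr_topology_def
      by (rule continuous_map_from_subtopology[OF continuous_map_product_projection]) simp
    then show "continuous_map distr_topology euclidean (\<lambda>T. dilation a T \<phi>)"
      by (simp add: dil_eq)
  qed
  moreover have "dilation a ` topspace distr_topology \<subseteq> distributions"
    using distribution_dil[OF _ a] by (auto simp: top_distr distributions_def)
  ultimately have "continuous_map distr_topology (subtopology (product_topology (\<lambda>_. euclidean) UNIV) distributions) (dilation a)"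
    by (auto simp: continuous_map_in_subtopology image_subset_iff Pi_iff)
  then show ?thesis by (simp add: distr_topology_def)
qed

lemma LD_pd:
  fixes L :: "('n::finite) distr \<Rightarrow> 'n distr" and a :: "real^'n"
  assumes L: "L \<in> M_class" and a: "\<forall>i. a$i \<noteq> 0" and Q: "pd Q"
  shows "L (dilation a Q) = dilation a (L Q)"
proof -
  have cl: "cont_lin_op L" and ev: "\<And>\<alpha>. \<exists>c. L (monomial_distr \<alpha>) = (\<lambda>\<phi>. c * monomial_distr \<alpha> \<phi>)"
    using L by (auto simp: M_class_def)
  have Ladd: "\<And>T S. distribution T \<Longrightarrow> distribution S \<Longrightarrow> L (\<lambda>\<phi>. T \<phi> + S \<phi>) = (\<lambda>\<phi>. L T \<phi> + L S \<phi>)"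
    using cl by (auto simp: cont_lin_op_def distributions_def)
  have Lsc: "\<And>T c. distribution T \<Longrightarrow> L (\<lambda>\<phi>. c * T \<phi>) = (\<lambda>\<phi>. c * L T \<phi>)"
    using cl by (auto simp: cont_lin_op_def distributions_def)
  have L0: "L (\<lambda>\<phi>. 0) = (\<lambda>\<phi>. 0)" using Lsc[OF dist_zero, of 0] by simp
  have dsum: "\<And>T S k. dilation a (\<lambda>\<phi>. T \<phi> + k * S \<phi>) = (\<lambda>\<phi>. dilation a T \<phi> + k * dilation a S \<phi>)"
    by (simp add: dilation_def)
  have dsc: "\<And>T k. dilation a (\<lambda>\<phi>. k * T \<phi>) = (\<lambda>\<phi>. k * dilation a T \<phi>)"
    by (simp add: dilation_def)
  show ?thesis using Q
  proof (induction rule: pd.induct)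
    case pd0
    have "dilation a (\<lambda>\<phi>. 0) = (\<lambda>\<phi>. 0)" by (simp add: dilation_def)
    then show ?case using L0 by simp
  next
    case (pdS Q c \<alpha>)
    obtain k where k: "L (monomial_distr \<alpha>) = (\<lambda>\<phi>. k * monomial_distr \<alpha> \<phi>)" using ev by blast
    define aa where "aa = complex_of_real (\<Prod>i\<in>UNIV. a$i ^ \<alpha> i)"
    have dM: "dilation a (monomial_distr \<alpha>) = (\<lambda>\<phi>. aa * monomial_distr \<alpha> \<phi>)"
      unfolding aa_def by (rule dil_mono[OF a])
    have dQ: "distribution Q" using pdS(1) pd_dist by blast
    have M: "distribution (monomial_distr \<alpha>)" by (rule monomial_distribution)
    have "L (dilation a (\<lambda>\<phi>. Q \<phi> + c * monomial_distr \<alpha> \<phi>)) = L (\<lambda>\<phi>. dilation a Q \<phi> + (c * aa) * monomial_distr \<alpha> \<phi>)"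
      by (simp add: dsum dM mult.assoc)
    also have "\<dots> = (\<lambda>\<phi>. L (dilation a Q) \<phi> + (c * aa) * L (monomial_distr \<alpha>) \<phi>)"
      using Ladd[OF distribution_dil[OF dQ a] dist_cmult[OF M]] Lsc[OF M] by simp
    also have "\<dots> = (\<lambda>\<phi>. dilation a (L Q) \<phi> + c * (k * (aa * monomial_distr \<alpha> \<phi>)))"
      using pdS.IH k by (simp add: mult_ac)
    also have "\<dots> = dilation a (\<lambda>\<phi>. L Q \<phi> + c * L (monomial_distr \<alpha>) \<phi>)"
      unfolding dsum k dsc dM by simp
    also have "\<dots> = dilation a (L (\<lambda>\<phi>. Q \<phi> + c * monomial_distr \<alpha> \<phi>))"
      using Ladd[OF dQ dist_cmult[OF M]] Lsc[OF M] by simp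
    finally show ?case .
  qed
qed

theorem lemma1:
  fixes L :: "('n::finite) distr \<Rightarrow> 'n distr" and a :: "real^'n"
  assumes "L \<in> M_class"
    and "\<forall>i. a$i \<noteq> 0"
  shows "\<forall>T\<in>distributions. L (dilation a T) = dilation a (L T)"
proof
  fix T :: "'n distr" assume T: "T \<in> distributions"
  have cL: "continuous_map distr_topology distr_topology L"
    using assms(1) by (simp add: M_class_def cont_lin_op_def)
  have cD: "continuous_map distr_topology distr_topology (dilation a)" by (rule cont_dil[OF assms(2)])
  have "(L \<circ> dilation a) T = (dilation a \<circ> L) T"
  proof (rule agree[OF _ _ _ T])
    show "continuous_map distr_topology distr_topology (L \<circ> dilation a)"
      by (rule continuous_map_compose[OF cD cL])
    show "continuous_map distr_topology distr_topology (dilation a \<circ> L)"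
      by (rule continuous_map_compose[OF cL cD])
    fix Q :: "'n distr" assume "pd Q"
    then show "(L \<circ> dilation a) Q = (dilation a \<circ> L) Q" using LD_pd[OF assms] by simp
  qed
  then show "L (dilation a T) = dilation a (L T)" by simp
qed


end
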